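(* Let $\mathcal X$ be a separable Hilbert space, $a:\mathcal X\times\mathcal X\to\mathbb R$ a bounded bilinear form with $\inf_{x\neq0}a(x,x)/\|x\|_{\mathcal X}^2=c_0>0$, $f\in\mathcal X^*$, and let $u\in\mathcal X$ solve $a(u,v)=f(v)$ for all $v\in\mathcal X$. Let $(w_n)_{n\in\mathbb N}$ be a Riesz basis of $\mathcal X$ with a constant $C>0$ such that every $x=\sum_n\lambda_nw_n\in\mathcal X$ satisfies $C^{-1}\|x\|_{\mathcal X}^2\le\sum_n\lambda_n^2\le C\|x\|_{\mathcal X}^2$, and let $\mathcal X_\ell={\rm span}\{w_1,\dots,w_{N_\ell}\}$ for integers $N_\ell<N_{\ell+1}$; let $u_\ell\in\mathcal X_\ell$ solve $a(u_\ell,v)=f(v)$ for all $v\in\mathcal X_\ell$. If the matrix $M_{ij}:=a(w_j,w_i)$ belongs to the Jaffard class $\mathcal J$, then there exists $C_{\rm qo}>0$ with \[ C_{\rm qo}^{-1}\|u-u_\ell\|_{\mathcal X}^2\le\sum_{k=\ell}^\infty\|u_{k+1}-u_k\|_{\mathcal X}^2\le C_{\rm qo}\|u-u_\ell\|_{\mathcal X}^2\quad\text{for all }\ell\in\mathbb N. \] The constant $C_{\rm qo}$ depends only on $(w_n)$, $a$, $C$, $c_0$, the Jaffard class and $\mathcal X$.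
   Context: $M\in\mathcal J$ means there exist a metric $d$ on $\mathbb N$ with $\sup_i\sum_j\exp(-\varepsilon d(i,j))<\infty$ for all $\varepsilon>0$, and $\gamma>0$, such that for every $0<\gamma'<\gamma$ there is $C(\gamma')$ with $|M_{ij}|\le C(\gamma')\exp(-\gamma'd(i,j))$ for all $i,j$. *)

theory Defs
  imports "HOL-Analysis.Analysis"
begin

definition riesz_basis :: "(nat \<Rightarrow> 'a::real_normed_vector) \<Rightarrow> real \<Rightarrow> bool" where
  "riesz_basis w C \<longleftrightarrow> C > 0 \<and>
     (\<forall>x. \<exists>lam. (\<lambda>n. lam n *\<^sub>R w n) sums x) \<and>
     (\<forall>x lam. (\<lambda>n. lam n *\<^sub>R w n) sums x \<longrightarrow>
        summable (\<lambda>n. (lam n)\<^sup>2) \<and>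
        (1 / C) * (norm x)\<^sup>2 \<le> (\<Sum>n. (lam n)\<^sup>2) \<and>
        (\<Sum>n. (lam n)\<^sup>2) \<le> C * (norm x)\<^sup>2)"

definition nat_metric :: "(nat \<Rightarrow> nat \<Rightarrow> real) \<Rightarrow> bool" where
  "nat_metric d \<longleftrightarrow> (\<forall>i j. 0 \<le> d i j) \<and> (\<forall>i j. d i j = 0 \<longleftrightarrow> i = j) \<and>
     (\<forall>i j. d i j = d j i) \<and> (\<forall>i j k. d i k \<le> d i j + d j k)"

definition jaffard_class :: "(nat \<Rightarrow> nat \<Rightarrow> real) set" where
  "jaffard_class = {M. \<exists>d. nat_metric d \<and>
     (\<forall>\<epsilon>>0. (\<forall>i. summable (\<lambda>j. exp (- \<epsilon> * d i j))) \<and>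
              (\<exists>B. \<forall>i. (\<Sum>j. exp (- \<epsilon> * d i j)) \<le> B)) \<and>
     (\<exists>\<gamma>>0. \<forall>\<gamma>'. 0 < \<gamma>' \<and> \<gamma>' < \<gamma> \<longrightarrow>
        (\<exists>Cg. \<forall>i j. \<bar>M i j\<bar> \<le> Cg * exp (- \<gamma>' * d i j)))}"

end

theory Submission
  imports Defs
begin
locale qo =
  fixes a :: "'x::real_normed_vector \<Rightarrow> 'x \<Rightarrow> real" and w :: "nat \<Rightarrow> 'x"
    and C c0 :: real and d :: "nat \<Rightarrow> nat \<Rightarrow> real" and \<gamma> Cg :: real
  assumes bdd: "bounded_bilinear a" and c0pos: "c0 > 0"
    and coer: "\<And>x. c0 * (norm x)\<^sup>2 \<le> a x x"
    and riesz: "riesz_basis w C" and met: "nat_metric d"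
    and sumb: "\<And>\<epsilon>. \<epsilon> > 0 \<Longrightarrow> (\<forall>i. summable (\<lambda>j. exp (- \<epsilon> * d i j))) \<and>
                    (\<exists>B. \<forall>i. (\<Sum>j. exp (- \<epsilon> * d i j)) \<le> B)"
    and gpos: "\<gamma> > 0"
    and decay: "\<And>i j. \<bar>a (w j) (w i)\<bar> \<le> Cg * exp (- \<gamma> * d i j)"
begin

abbreviation X :: "nat \<Rightarrow> 'x set" where "X n \<equiv> span (w ` {..<n})"

lemma Cpos: "C > 0" using riesz unfolding riesz_basis_def by auto

lemma fin_riesz:
  "(1 / C) * (norm (\<Sum>i<n. l i *\<^sub>R w i))\<^sup>2 \<le> (\<Sum>i<n. (l i)\<^sup>2) \<and>
   (\<Sum>i<n. (l i)\<^sup>2) \<le> C * (norm (\<Sum>i<n. l i *\<^sub>R w i))\<^sup>2"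
proof -
  define l' where "l' i = (if i < n then l i else 0)" for i
  have s: "(\<lambda>i. l' i *\<^sub>R w i) sums (\<Sum>i<n. l i *\<^sub>R w i)"
  proof -
    have "(\<lambda>i. l' i *\<^sub>R w i) sums (\<Sum>i<n. l' i *\<^sub>R w i)"
      by (rule sums_finite) (auto simp: l'_def)
    then show ?thesis by (simp add: l'_def)
  qed
  have e: "(\<Sum>i. (l' i)\<^sup>2) = (\<Sum>i<n. (l i)\<^sup>2)"
  proof -
    have "(\<Sum>i. (l' i)\<^sup>2) = (\<Sum>i<n. (l' i)\<^sup>2)"
      by (rule suminf_finite) (auto simp: l'_def)
    then show ?thesis by (simp add: l'_def)
  qed
  from riesz s show ?thesis unfolding riesz_basis_def e[symmetric] by blast
qed

lemma fin_uniq: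
  assumes "(\<Sum>i<n. l i *\<^sub>R w i) = 0" "i < n" shows "l i = 0"
proof -
  have "(\<Sum>i<n. (l i)\<^sup>2) \<le> 0" using fin_riesz[where n=n and l=l] assms(1) by simp
  moreover have "(l i)\<^sup>2 \<le> (\<Sum>i<n. (l i)\<^sup>2)"
    by (rule member_le_sum) (use assms(2) in auto)
  ultimately have "(l i)\<^sup>2 \<le> 0" by linarith
  then show ?thesis by simp
qed

lemma norm_w: "(norm (w n))\<^sup>2 \<le> C"
proof -
  define l where "l i = (if i = n then 1 else (0::real))" for i
  have "(\<Sum>i<Suc n. l i *\<^sub>R w i) = w n" by (simp add: l_def if_distrib sum.delta cong: if_cong)
  moreover have "(\<Sum>i<Suc n. (l i)\<^sup>2) = 1" by (simp add: l_def if_distrib sum.delta cong: if_cong)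
  ultimately show ?thesis using fin_riesz[where n="Suc n" and l=l] Cpos by (simp add: field_simps)
qed

lemma X_repr: "y \<in> X n \<Longrightarrow> \<exists>l. y = (\<Sum>i<n. l i *\<^sub>R w i)"
proof (induction n arbitrary: y)
  case 0 then show ?case by simp
next
  case (Suc n)
  have "w ` {..<Suc n} = insert (w n) (w ` {..<n})" by (simp add: lessThan_Suc)
  then have "y \<in> span (insert (w n) (w ` {..<n}))" using Suc.prems by simp
  then obtain k where "y - k *\<^sub>R w n \<in> X n" unfolding span_insert by blast
  then obtain l where l: "y - k *\<^sub>R w n = (\<Sum>i<n. l i *\<^sub>R w i)" using Suc.IH by blast
  define l' where "l' i = (if i = n then k else l i)" for i
  have "(\<Sum>i<Suc n. l' i *\<^sub>R w i) = (\<Sum>i<n. l i *\<^sub>R w i) + k *\<^sub>R w n"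
    by (simp add: l'_def)
  also have "\<dots> = y" using l by (simp add: algebra_simps)
  finally have "y = (\<Sum>i<Suc n. l' i *\<^sub>R w i)" by simp
  then show ?case by (rule exI[of _ l'])
qed

lemma X_sum: "(\<Sum>i<n. l i *\<^sub>R w i) \<in> X n"
  by (intro span_sum span_scale span_base) auto

lemma X_mono: "m \<le> n \<Longrightarrow> X m \<subseteq> X n"
  by (intro span_mono image_mono) auto

lemma w_in_X: "i < n \<Longrightarrow> w i \<in> X n" by (intro span_base) auto

lemma a_sum_left: "a (\<Sum>i\<in>S. f i) z = (\<Sum>i\<in>S. a (f i) z)"
  using bounded_bilinear.sum_left[OF bdd] .
lemma a_sum_right: "a z (\<Sum>i\<in>S. f i) = (\<Sum>i\<in>S. a z (f i))"
  using bounded_bilinear.sum_right[OF bdd] .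
lemma a_scale_left: "a (c *\<^sub>R x) z = c * a x z"
  using bounded_bilinear.scaleR_left[OF bdd] by simp
lemma a_scale_right: "a z (c *\<^sub>R x) = c * a z x"
  using bounded_bilinear.scaleR_right[OF bdd] by simp
lemma a_diff_left: "a (x - y) z = a x z - a y z"
  using bounded_bilinear.diff_left[OF bdd] .
lemma a_diff_right: "a z (x - y) = a z x - a z y"
  using bounded_bilinear.diff_right[OF bdd] .
lemma a_add_left: "a (x + y) z = a x z + a y z"
  using bounded_bilinear.add_left[OF bdd] .
lemma a_add_right: "a z (x + y) = a z x + a z y"
  using bounded_bilinear.add_right[OF bdd] .

lemma a_zero_right: "(\<And>i. i < n \<Longrightarrow> a y (w i) = 0) \<Longrightarrow> z \<in> X n \<Longrightarrow> a y z = 0"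
  by (auto dest!: X_repr simp: a_sum_right a_scale_right)
lemma a_zero_left: "(\<And>i. i < n \<Longrightarrow> a (w i) y = 0) \<Longrightarrow> z \<in> X n \<Longrightarrow> a z y = 0"
  by (auto dest!: X_repr simp: a_sum_left a_scale_left)

lemma a_self_zero: "a y y = 0 \<Longrightarrow> y = 0"
  using coer[of y] c0pos by (simp add: zero_less_mult_iff mult_le_0_iff)

lemma w_notin: "w m \<notin> X m"
proof
  assume "w m \<in> X m"
  then obtain l where l: "w m = (\<Sum>i<m. l i *\<^sub>R w i)" using X_repr by blast
  define l' where "l' i = (if i = m then -1 else l i)" for i
  have "(\<Sum>i<Suc m. l' i *\<^sub>R w i) = (\<Sum>i<m. l i *\<^sub>R w i) - w m"
    by (simp add: l'_def)
  also have "\<dots> = 0" using l by simp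
  finally have "l' m = 0" by (rule fin_uniq) simp
  then show False by (simp add: l'_def)
qed

lemma solvable: "\<exists>y\<in>X m. \<forall>i<m. a y (w i) = g i"
proof (induction m arbitrary: g)
  case 0 show ?case by (auto intro: span_zero)
next
  case (Suc m)
  obtain y0 where y0: "y0 \<in> X m" "\<forall>i<m. a y0 (w i) = g i" using Suc.IH[of g] by blast
  obtain z where z: "z \<in> X m" "\<forall>i<m. a z (w i) = a (w m) (w i)" using Suc.IH[of "\<lambda>i. a (w m) (w i)"] by blast
  define q where "q = w m - z"
  have q0: "a q (w i) = 0" if "i < m" for i using z that by (simp add: q_def a_diff_left)
  have qX: "q \<in> X (Suc m)" unfolding q_def
    using X_mono[of m "Suc m"] z(1) w_in_X[of m "Suc m"] by (auto intro: span_diff)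
  have qnz: "q \<noteq> 0" using w_notin[of m] z(1) by (auto simp: q_def)
  have "a q (w m) = a q q"
  proof -
    have "a q z = 0" by (rule a_zero_right[OF _ z(1)]) (use q0 in auto)
    then show ?thesis by (simp add: q_def a_diff_right)
  qed
  moreover have "a q q \<noteq> 0" using a_self_zero qnz by blast
  ultimately have qm: "a q (w m) \<noteq> 0" by simp
  define t where "t = (g m - a y0 (w m)) / a q (w m)"
  define y where "y = y0 + t *\<^sub>R q"
  have "y \<in> X (Suc m)" unfolding y_def
    using X_mono[of m "Suc m"] y0(1) qX by (auto intro: span_add span_scale)
  moreover have "\<forall>i<Suc m. a y (w i) = g i"
  proof safe
    fix i assume "i < Suc m"
    then consider "i < m" | "i = m" by linarith
    then show "a y (w i) = g i"
      by cases (use y0 q0 qm in \<open>auto simp: y_def t_def a_add_left a_scale_left\<close>)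
  qed
  ultimately show ?case by blast
qed

end

lemma exp_bound:
  fixes t \<delta> \<gamma> :: real
  assumes t: "0 \<le> t" and dpos: "0 < \<delta>" and dg: "\<delta> \<le> \<gamma>/2"
  shows "exp (-\<gamma>*t) * (exp (\<delta>*t) - 1) \<le> \<delta>*(4/\<gamma>)*exp(-(\<gamma>/4)*t)"
proof -
  have gpos: "\<gamma> > 0" using dpos dg by linarith
  have h1: "exp (\<delta>*t) - 1 \<le> \<delta>*t*exp(\<delta>*t)"
  proof -
    have "exp (-(\<delta>*t)) \<ge> 1 - \<delta>*t" using exp_ge_add_one_self[of "-(\<delta>*t)"] by simp
    then have "exp (-(\<delta>*t)) * exp (\<delta>*t) \<ge> (1 - \<delta>*t) * exp (\<delta>*t)"
      by (intro mult_right_mono) auto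
    then show ?thesis by (simp add: exp_minus_inverse algebra_simps)
  qed
  have "exp (-\<gamma>*t) * (exp (\<delta>*t) - 1) \<le> exp (-\<gamma>*t) * (\<delta>*t*exp(\<delta>*t))"
    by (intro mult_left_mono h1) auto
  also have "\<dots> = \<delta>*t*exp(-(\<gamma>-\<delta>)*t)"
    by (simp add: algebra_simps flip: exp_add)
  also have "\<dots> \<le> \<delta>*t*exp(-(\<gamma>/2)*t)"
  proof (intro mult_left_mono)
    have "-(\<gamma>-\<delta>)*t \<le> -(\<gamma>/2)*t"
      using mult_right_mono[of "-(\<gamma>-\<delta>)" "-(\<gamma>/2)" t] dg t by simp
    then show "exp (-(\<gamma>-\<delta>)*t) \<le> exp (-(\<gamma>/2)*t)" by simp
  qed (use t dpos in auto)
  also have "\<dots> = \<delta>*(t*exp(-(\<gamma>/4)*t))*exp(-(\<gamma>/4)*t)"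
    by (simp add: algebra_simps flip: exp_add)
  also have "\<dots> \<le> \<delta>*(4/\<gamma>)*exp(-(\<gamma>/4)*t)"
  proof -
    have "exp ((\<gamma>/4)*t) \<ge> 1 + (\<gamma>/4)*t" by (rule exp_ge_add_one_self)
    then have "t \<le> (4/\<gamma>) * exp ((\<gamma>/4)*t)" using gpos by (simp add: field_simps)
    then have "t*exp(-(\<gamma>/4)*t) \<le> (4/\<gamma>) * exp ((\<gamma>/4)*t) * exp(-(\<gamma>/4)*t)"
      by (intro mult_right_mono) auto
    also have "\<dots> = 4/\<gamma>" by (simp flip: exp_add)
    finally show ?thesis using dpos by (intro mult_right_mono mult_left_mono) auto
  qed
  finally show ?thesis .
qed

lemma abs_exp_sub: "\<bar>exp (s::real) - 1\<bar> \<le> exp \<bar>s\<bar> - 1"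
proof (cases "s \<ge> 0")
  case True then show ?thesis by simp
next
  case False
  have "exp s * exp (-s) = 1" by (simp flip: exp_add)
  moreover have "exp s \<le> 1" using False by simp
  moreover have "exp s > 0" by simp
  ultimately have "1 - exp s \<le> exp (-s) - 1"
    by (smt (verit, best) exp_ge_add_one_self mult_less_cancel_left1)
  then show ?thesis using False \<open>exp s \<le> 1\<close> by simp
qed

lemma quad_schur:
  fixes G :: "nat \<Rightarrow> nat \<Rightarrow> real"
  assumes fin: "finite S" and R: "\<And>i. i \<in> S \<Longrightarrow> (\<Sum>j\<in>S. G i j) \<le> R"
    and sym: "\<And>i j. G i j = G j i" and nn: "\<And>i j. G i j \<ge> 0"
  shows "(\<Sum>i\<in>S. \<Sum>j\<in>S. \<bar>m i\<bar> * \<bar>m j\<bar> * G i j) \<le> R * (\<Sum>i\<in>S. (m i)\<^sup>2)"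
proof -
  have "(\<Sum>i\<in>S. \<Sum>j\<in>S. \<bar>m i\<bar> * \<bar>m j\<bar> * G i j) \<le>
        (\<Sum>i\<in>S. \<Sum>j\<in>S. ((m i)\<^sup>2/2) * G i j + ((m j)\<^sup>2/2) * G i j)"
  proof (intro sum_mono)
    fix i j
    have "\<bar>m i\<bar> * \<bar>m j\<bar> \<le> (m i)\<^sup>2/2 + (m j)\<^sup>2/2"
      using sum_squares_bound[of "\<bar>m i\<bar>" "\<bar>m j\<bar>"] by (simp add: power2_eq_square)
    then have "\<bar>m i\<bar> * \<bar>m j\<bar> * G i j \<le> ((m i)\<^sup>2/2 + (m j)\<^sup>2/2) * G i j"
      by (intro mult_right_mono nn)
    then show "\<bar>m i\<bar> * \<bar>m j\<bar> * G i j \<le> ((m i)\<^sup>2/2) * G i j + ((m j)\<^sup>2/2) * G i j"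
      by (simp add: algebra_simps)
  qed
  also have "\<dots> = (\<Sum>i\<in>S. ((m i)\<^sup>2/2) * (\<Sum>j\<in>S. G i j)) + (\<Sum>j\<in>S. ((m j)\<^sup>2/2) * (\<Sum>i\<in>S. G j i))"
  proof -
    have e1: "(\<Sum>i\<in>S. \<Sum>j\<in>S. ((m j)\<^sup>2/2) * G i j) = (\<Sum>j\<in>S. \<Sum>i\<in>S. ((m j)\<^sup>2/2) * G j i)"
      by (subst sum.swap) (simp add: sym)
    show ?thesis by (simp only: sum.distrib e1 sum_distrib_left)
  qed
  also have "\<dots> \<le> (\<Sum>i\<in>S. ((m i)\<^sup>2/2) * R) + (\<Sum>j\<in>S. ((m j)\<^sup>2/2) * R)"
    by (intro add_mono sum_mono mult_left_mono R) auto
  also have "\<dots> = R * (\<Sum>i\<in>S. (m i)\<^sup>2)"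
    by (simp add: sum_distrib_left sum_distrib_right algebra_simps flip: sum.distrib)
  finally show ?thesis .
qed

context qo begin

lemma abound: "\<exists>K>0. \<forall>x y. \<bar>a x y\<bar> \<le> norm x * norm y * K"
  using bounded_bilinear.pos_bounded[OF bdd] by simp

definition v :: "nat \<Rightarrow> 'x" where
  "v n = (SOME y. y \<in> X (Suc n) \<and> (\<forall>i<Suc n. a y (w i) = (if i = n then 1 else 0)))"

lemma v_props: "v n \<in> X (Suc n) \<and> (\<forall>i<Suc n. a (v n) (w i) = (if i = n then 1 else 0))"
proof -
  obtain y where "y \<in> X (Suc n)" "\<forall>i<Suc n. a y (w i) = (if i = n then 1 else 0)"
    using solvable[of "Suc n" "\<lambda>i. if i = n then 1 else 0"] by blast
  then show ?thesis unfolding v_def by (rule someI[where P="\<lambda>y. y \<in> X (Suc n) \<and> (\<forall>i<Suc n. a y (w i) = (if i = n then 1 else 0))", OF conjI])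
qed

lemma v_X: "v n \<in> X (Suc n)" using v_props by blast
lemma v_w: "i < Suc n \<Longrightarrow> a (v n) (w i) = (if i = n then 1 else 0)" using v_props by blast
lemma v_perp: "z \<in> X n \<Longrightarrow> a (v n) z = 0"
  by (rule a_zero_right[of n]) (use v_w in auto)

definition vc :: "nat \<Rightarrow> nat \<Rightarrow> real" where
  "vc n = (SOME l. v n = (\<Sum>i<Suc n. l i *\<^sub>R w i))"

lemma vc: "v n = (\<Sum>i<Suc n. vc n i *\<^sub>R w i)"
proof -
  obtain l where "v n = (\<Sum>i<Suc n. l i *\<^sub>R w i)" using X_repr[OF v_X] by blast
  then show ?thesis unfolding vc_def by (rule someI[where P="\<lambda>l. v n = (\<Sum>i<Suc n. l i *\<^sub>R w i)"])
qed

lemma v_diag: "a (v n) (v n) = vc n n"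
proof -
  have "a (v n) (v n) = a (v n) (\<Sum>i<Suc n. vc n i *\<^sub>R w i)"
    using vc[of n] by (rule arg_cong)
  also have "\<dots> = (\<Sum>i<Suc n. vc n i * a (v n) (w i))"
    by (simp only: a_sum_right a_scale_right)
  also have "\<dots> = (\<Sum>i<Suc n. if i = n then vc n i else 0)"
    by (rule sum.cong) (auto simp: v_w)
  also have "\<dots> = vc n n" by simp
  finally show ?thesis .
qed

lemma diag_lb: "\<exists>\<rho>>0. \<forall>n. vc n n \<ge> \<rho>"
proof -
  obtain K where K: "K > 0" "\<And>x y. \<bar>a x y\<bar> \<le> norm x * norm y * K" using abound by blast
  have Cp: "C > 0" by (rule Cpos)
  have "vc n n \<ge> c0 / (C * K\<^sup>2)" for n
  proof -
    have "1 = a (v n) (w n)" using v_w[of n n] by simp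
    also have "\<dots> \<le> norm (v n) * norm (w n) * K" using K(2)[of "v n" "w n"] by linarith
    finally have h: "1 \<le> norm (v n) * norm (w n) * K" .
    then have "1 \<le> (norm (v n) * norm (w n) * K)\<^sup>2"
      by (smt (verit) one_le_power)
    also have "\<dots> = (norm (v n))\<^sup>2 * (norm (w n))\<^sup>2 * K\<^sup>2" by (simp add: power_mult_distrib)
    also have "\<dots> \<le> (norm (v n))\<^sup>2 * C * K\<^sup>2"
      by (intro mult_right_mono mult_left_mono norm_w) auto
    finally have "1 / (C * K\<^sup>2) \<le> (norm (v n))\<^sup>2" using Cp K(1) by (simp add: field_simps)
    then have "c0 / (C * K\<^sup>2) \<le> c0 * (norm (v n))\<^sup>2"
      using c0pos by (simp add: divide_simps)
    also have "\<dots> \<le> a (v n) (v n)" by (rule coer)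
    finally show ?thesis by (simp add: v_diag)
  qed
  moreover have "c0 / (C * K\<^sup>2) > 0" using c0pos Cp K by simp
  ultimately show ?thesis by blast
qed

end

context qo begin

lemma dprops: "\<And>i j. 0 \<le> d i j" "\<And>i. d i i = 0" "\<And>i j. d i j = d j i" "\<And>i j k. d i k \<le> d i j + d j k"
  using met unfolding nat_metric_def by auto

lemma Cg_nn: "Cg \<ge> 0"
  using decay[of 0 0] dprops(2)[of 0] by simp

lemma decay_v: "\<exists>\<delta>>0. \<exists>Kd\<ge>0. \<forall>n i. i \<le> n \<longrightarrow> \<bar>vc n i\<bar> \<le> Kd * exp (- \<delta> * d i n)"
proof -
  have Cp: "C > 0" by (rule Cpos)
  obtain B where Bs: "\<And>i. summable (\<lambda>j. exp (-(\<gamma>/4) * d i j))" "\<And>i. (\<Sum>j. exp (-(\<gamma>/4) * d i j)) \<le> B"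
    using sumb[of "\<gamma>/4"] gpos by auto
  have Bnn: "B \<ge> 0" using Bs(2)[of 0] suminf_nonneg[OF Bs(1)[of 0]] by fastforce
  have CgB: "Cg * B \<ge> 0" using Cg_nn Bnn by simp
  define \<delta> where "\<delta> = min (\<gamma>/2) (c0*\<gamma>/(8*C*(Cg*B+1)))"
  have dpos: "\<delta> > 0" unfolding \<delta>_def using gpos c0pos Cp CgB by auto
  have dg: "\<delta> \<le> \<gamma>/2" unfolding \<delta>_def by simp
  define \<eta> where "\<eta> = Cg*\<delta>*(4/\<gamma>)"
  have eta_nn: "\<eta> \<ge> 0" unfolding \<eta>_def using Cg_nn dpos gpos by simp
  have etaB: "\<eta>*B \<le> c0/(2*C)"
  proof -
    have "\<delta> \<le> c0*\<gamma>/(8*C*(Cg*B+1))" unfolding \<delta>_def by simp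
    then have "(Cg*B)*\<delta>*(4/\<gamma>) \<le> (Cg*B)*(c0*\<gamma>/(8*C*(Cg*B+1)))*(4/\<gamma>)"
      using CgB gpos by (intro mult_right_mono mult_left_mono) auto
    also have "\<dots> = c0/(2*C) * (Cg*B/(Cg*B+1))"
    proof -
      have h: "Cg*B+1 > 0" using CgB by simp
      have h2: "C*(Cg*B+1) > 0" using Cp h by simp
      show ?thesis using gpos h h2 by (simp add: field_simps)
    qed
    also have "\<dots> \<le> c0/(2*C) * 1"
      using c0pos Cp CgB by (intro mult_left_mono) auto
    finally show ?thesis unfolding \<eta>_def by (simp add: algebra_simps)
  qed
  define G where "G i j = \<eta> * exp (-(\<gamma>/4) * d i j)" for i j
  have Gnn: "G i j \<ge> 0" for i j unfolding G_def using eta_nn by simp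
  have Gsym: "G i j = G j i" for i j unfolding G_def using dprops(3) by simp
  have Grow: "(\<Sum>j\<in>S. G i j) \<le> \<eta>*B" if "finite S" for i S
  proof -
    have "(\<Sum>j\<in>S. exp (-(\<gamma>/4) * d i j)) \<le> (\<Sum>j. exp (-(\<gamma>/4) * d i j))"
      by (rule sum_le_suminf[OF Bs(1) that]) auto
    also have "\<dots> \<le> B" by (rule Bs(2))
    finally have "(\<Sum>j\<in>S. exp (-(\<gamma>/4) * d i j)) \<le> B" .
    then have "\<eta> * (\<Sum>j\<in>S. exp (-(\<gamma>/4) * d i j)) \<le> \<eta> * B" using eta_nn by (rule mult_left_mono)
    then show ?thesis unfolding G_def by (simp add: sum_distrib_left)
  qed
  have Gent: "\<bar>a (w j) (w i)\<bar> * (exp (\<delta> * d i j) - 1) \<le> G i j" for i j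
  proof -
    have e0: "exp (\<delta> * d i j) - 1 \<ge> 0" using dpos dprops(1)[of i j] by simp
    have "\<bar>a (w j) (w i)\<bar> * (exp (\<delta> * d i j) - 1) \<le> Cg * exp (- \<gamma> * d i j) * (exp (\<delta> * d i j) - 1)"
      by (rule mult_right_mono[OF decay e0])
    also have "\<dots> = Cg * (exp (- \<gamma> * d i j) * (exp (\<delta> * d i j) - 1))" by simp
    also have "\<dots> \<le> Cg * (\<delta>*(4/\<gamma>)*exp(-(\<gamma>/4)*d i j))"
      by (intro mult_left_mono exp_bound dprops(1) dpos dg Cg_nn)
    also have "\<dots> = G i j" unfolding G_def \<eta>_def by simp
    finally show ?thesis .
  qed
  have main: "\<bar>vc n i0\<bar> \<le> (2*C/c0) * exp (- \<delta> * d i0 n)" if "i0 \<le> n" for n i0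
  proof -
    define S where "S = {..<Suc n}"
    have finS: "finite S" unfolding S_def by simp
    have nS: "n \<in> S" "i0 \<in> S" unfolding S_def using that by auto
    define l where "l = vc n"
    define om where "om k = exp (\<delta> * d n k)" for k
    define mu where "mu k = om k * l k" for k
    define M where "M i j = a (w j) (w i)" for i j
    have omn: "om n = 1" unfolding om_def using dprops(2) by simp
    have ompos: "om k > 0" for k unfolding om_def by simp
    have aw: "a (v n) (w i) = (\<Sum>j\<in>S. l j * M i j)" for i
    proof -
      have "a (v n) (w i) = a (\<Sum>j<Suc n. vc n j *\<^sub>R w j) (w i)"
        using vc[of n] by (rule arg_cong)
      also have "\<dots> = (\<Sum>j\<in>S. l j * M i j)"
        unfolding S_def l_def M_def by (simp only: a_sum_left a_scale_left)
      finally show ?thesis .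
    qed
    have eq1: "(\<Sum>i\<in>S. (om i)\<^sup>2 * l i * a (v n) (w i)) = l n"
    proof -
      have "(\<Sum>i\<in>S. (om i)\<^sup>2 * l i * a (v n) (w i)) = (\<Sum>i\<in>S. if i = n then l n else 0)"
        by (rule sum.cong) (auto simp: S_def v_w omn)
      also have "\<dots> = l n" using finS nS by simp
      finally show ?thesis .
    qed
    define Q0 where "Q0 = (\<Sum>i\<in>S. \<Sum>j\<in>S. mu i * mu j * M i j)"
    define Q1 where "Q1 = (\<Sum>i\<in>S. \<Sum>j\<in>S. mu i * mu j * M i j * (om i / om j - 1))"
    have eq2: "(\<Sum>i\<in>S. (om i)\<^sup>2 * l i * a (v n) (w i)) = Q0 + Q1"
    proof -
      have "(\<Sum>i\<in>S. (om i)\<^sup>2 * l i * a (v n) (w i)) = (\<Sum>i\<in>S. \<Sum>j\<in>S. (om i)\<^sup>2 * l i * (l j * M i j))"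
        by (simp add: aw sum_distrib_left)
      also have "\<dots> = (\<Sum>i\<in>S. \<Sum>j\<in>S. mu i * mu j * M i j + mu i * mu j * M i j * (om i / om j - 1))"
      proof (intro sum.cong refl)
        fix i j
        have "om j \<noteq> 0" using ompos[of j] by simp
        then show "(om i)\<^sup>2 * l i * (l j * M i j) = mu i * mu j * M i j + mu i * mu j * M i j * (om i / om j - 1)"
          unfolding mu_def by (simp add: field_simps power2_eq_square)
      qed
      also have "\<dots> = Q0 + Q1" unfolding Q0_def Q1_def by (simp add: sum.distrib)
      finally show ?thesis .
    qed
    define T where "T = (\<Sum>i\<in>S. (mu i)\<^sup>2)"
    have Tnn: "T \<ge> 0" unfolding T_def by (simp add: sum_nonneg)
    have Q0b: "Q0 \<ge> (c0/C) * T"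
    proof -
      define y where "y = (\<Sum>j\<in>S. mu j *\<^sub>R w j)"
      have "a y y = (\<Sum>j\<in>S. mu j * a (w j) y)" unfolding y_def by (simp only: a_sum_left a_scale_left)
      also have "\<dots> = (\<Sum>j\<in>S. \<Sum>i\<in>S. mu j * (mu i * M i j))"
        unfolding y_def M_def by (simp only: a_sum_right a_scale_right sum_distrib_left)
      also have "\<dots> = Q0" unfolding Q0_def by (subst sum.swap) (simp add: algebra_simps)
      finally have ayy: "a y y = Q0" .
      have "T \<le> C * (norm y)\<^sup>2" using fin_riesz[where n="Suc n" and l=mu]
        unfolding T_def y_def S_def by simp
      then have "(c0/C) * T \<le> (c0/C) * (C * (norm y)\<^sup>2)" using c0pos Cp by (intro mult_left_mono) auto
      also have "\<dots> = c0 * (norm y)\<^sup>2" using Cp by simp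
      also have "\<dots> \<le> a y y" by (rule coer)
      finally show ?thesis using ayy by simp
    qed
    have Q1b: "\<bar>Q1\<bar> \<le> (\<eta>*B) * T"
    proof -
      have ent: "\<bar>mu i * mu j * M i j * (om i / om j - 1)\<bar> \<le> \<bar>mu i\<bar> * \<bar>mu j\<bar> * G i j" for i j
      proof -
        have "om i / om j = exp (\<delta> * (d n i - d n j))" unfolding om_def by (simp add: exp_diff algebra_simps)
        then have "\<bar>om i / om j - 1\<bar> \<le> exp \<bar>\<delta> * (d n i - d n j)\<bar> - 1" using abs_exp_sub by simp
        also have "\<dots> \<le> exp (\<delta> * d i j) - 1"
        proof -
          have "\<bar>d n i - d n j\<bar> \<le> d i j" using dprops(4)[of n i j] dprops(4)[of n j i] dprops(3)[of i j] by linarith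
          then have "\<bar>\<delta> * (d n i - d n j)\<bar> \<le> \<delta> * d i j" using dpos by (simp add: abs_mult)
          then show ?thesis by simp
        qed
        finally have "\<bar>om i / om j - 1\<bar> \<le> exp (\<delta> * d i j) - 1" .
        then have "\<bar>M i j\<bar> * \<bar>om i / om j - 1\<bar> \<le> \<bar>M i j\<bar> * (exp (\<delta> * d i j) - 1)"
          by (intro mult_left_mono) auto
        also have "\<dots> \<le> G i j" using Gent[of j i] unfolding M_def by simp
        finally have "\<bar>M i j\<bar> * \<bar>om i / om j - 1\<bar> \<le> G i j" .
        then have "\<bar>mu i\<bar> * \<bar>mu j\<bar> * (\<bar>M i j\<bar> * \<bar>om i / om j - 1\<bar>) \<le> \<bar>mu i\<bar> * \<bar>mu j\<bar> * G i j"
          by (intro mult_left_mono) auto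
        moreover have "\<bar>mu i * mu j * M i j * (om i / om j - 1)\<bar> = \<bar>mu i\<bar> * \<bar>mu j\<bar> * (\<bar>M i j\<bar> * \<bar>om i / om j - 1\<bar>)"
          by (simp only: abs_mult mult.assoc)
        ultimately show ?thesis by simp
      qed
      have "\<bar>Q1\<bar> \<le> (\<Sum>i\<in>S. \<bar>\<Sum>j\<in>S. mu i * mu j * M i j * (om i / om j - 1)\<bar>)"
        unfolding Q1_def by (rule sum_abs)
      also have "\<dots> \<le> (\<Sum>i\<in>S. \<Sum>j\<in>S. \<bar>mu i * mu j * M i j * (om i / om j - 1)\<bar>)"
        by (intro sum_mono sum_abs)
      also have "\<dots> \<le> (\<Sum>i\<in>S. \<Sum>j\<in>S. \<bar>mu i\<bar> * \<bar>mu j\<bar> * G i j)"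
        by (intro sum_mono ent)
      also have "\<dots> \<le> (\<eta>*B) * T" unfolding T_def
        by (rule quad_schur[OF finS Grow[OF finS] Gsym Gnn])
      finally show ?thesis .
    qed
    have "l n = Q0 + Q1" using eq1 eq2 by simp
    also have "\<dots> \<ge> (c0/C) * T - (\<eta>*B) * T" using Q0b Q1b by linarith
    finally have "(c0/C - \<eta>*B) * T \<le> l n" by (simp add: algebra_simps)
    moreover have "(c0/(2*C)) * T \<le> (c0/C - \<eta>*B) * T"
      using etaB Tnn by (intro mult_right_mono) (auto simp: field_simps)
    ultimately have kT: "(c0/(2*C)) * T \<le> mu n" using omn unfolding mu_def by simp
    have mun: "(mu n)\<^sup>2 \<le> T" unfolding T_def by (rule member_le_sum) (use finS nS in auto)
    have kpos: "c0/(2*C) > 0" using c0pos Cp by simp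
    have Tb: "T \<le> (2*C/c0)\<^sup>2"
    proof (cases "T = 0")
      case True then show ?thesis by simp
    next
      case False
      then have Tp: "T > 0" using Tnn by simp
      have "((c0/(2*C)) * T)\<^sup>2 \<le> (mu n)\<^sup>2"
      proof (rule power_mono[OF kT])
        show "0 \<le> c0 / (2 * C) * T" by (rule mult_nonneg_nonneg) (use kpos Tp in auto)
      qed
      also have "\<dots> \<le> T" by (rule mun)
      finally have "(c0/(2*C))\<^sup>2 * T * T \<le> 1 * T" by (simp add: power2_eq_square algebra_simps)
      then have "(c0/(2*C))\<^sup>2 * T \<le> 1" using Tp by (simp add: mult_le_cancel_right)
      have k2: "(c0/(2*C))\<^sup>2 > 0" using c0pos Cp by simp
      have "T \<le> 1 / (c0/(2*C))\<^sup>2" using \<open>(c0/(2*C))\<^sup>2 * T \<le> 1\<close> k2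
        by (simp add: pos_le_divide_eq mult.commute)
      also have "1 / (c0/(2*C))\<^sup>2 = (2*C/c0)\<^sup>2" by (simp add: power_divide)
      finally show ?thesis .
    qed
    have "(mu i0)\<^sup>2 \<le> T" unfolding T_def by (rule member_le_sum) (use finS nS in auto)
    then have "\<bar>mu i0\<bar>\<^sup>2 \<le> (2*C/c0)\<^sup>2" using Tb by simp
    then have mub: "\<bar>mu i0\<bar> \<le> 2*C/c0"
      by (rule power2_le_imp_le) (use c0pos Cp in simp)
    have "mu i0 * exp (- \<delta> * d n i0) = l i0 * (exp (\<delta> * d n i0) * exp (- \<delta> * d n i0))"
      unfolding mu_def om_def by (simp only: mult.assoc mult.commute mult.left_commute)
    also have "exp (\<delta> * d n i0) * exp (- \<delta> * d n i0) = 1" by (simp flip: exp_add)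
    finally have "l i0 = mu i0 * exp (- \<delta> * d n i0)" by simp
    then have "\<bar>l i0\<bar> = \<bar>mu i0\<bar> * exp (- \<delta> * d i0 n)" using dprops(3)[of n i0] by (simp add: abs_mult)
    also have "\<dots> \<le> (2*C/c0) * exp (- \<delta> * d i0 n)" using mub by (intro mult_right_mono) auto
    finally show ?thesis unfolding l_def .
  qed
  show ?thesis
  proof (rule exI[of _ \<delta>], intro conjI exI[of _ "2*C/c0"] allI impI)
    show "\<delta> > 0" by (rule dpos)
    show "2*C/c0 \<ge> 0" using c0pos Cp by simp
    fix n i :: nat assume "i \<le> n" then show "\<bar>vc n i\<bar> \<le> 2*C/c0 * exp (- \<delta> * d i n)" by (rule main)
  qed
qed

end

lemma schur:
  fixes V :: "'i \<Rightarrow> 'j \<Rightarrow> real"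
  assumes finI: "finite I" and finJ: "finite J" and R0: "R \<ge> 0"
    and row: "\<And>i. i \<in> I \<Longrightarrow> (\<Sum>j\<in>J. \<bar>V i j\<bar>) \<le> R"
    and col: "\<And>j. j \<in> J \<Longrightarrow> (\<Sum>i\<in>I. \<bar>V i j\<bar>) \<le> R"
  shows "(\<Sum>i\<in>I. (\<Sum>j\<in>J. V i j * c j)\<^sup>2) \<le> R\<^sup>2 * (\<Sum>j\<in>J. (c j)\<^sup>2)"
proof -
  have cs: "(\<Sum>j\<in>J. V i j * c j)\<^sup>2 \<le> R * (\<Sum>j\<in>J. \<bar>V i j\<bar> * (c j)\<^sup>2)" if "i \<in> I" for i
  proof -
    have eq: "V i j * c j = sqrt \<bar>V i j\<bar> * (sgn (V i j) * sqrt \<bar>V i j\<bar> * c j)" for j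
    proof -
      have "sqrt \<bar>V i j\<bar> * sqrt \<bar>V i j\<bar> = \<bar>V i j\<bar>" by simp
      then show ?thesis by (metis (no_types, lifting) mult.assoc mult.left_commute sgn_mult_abs)
    qed
    have "(\<Sum>j\<in>J. V i j * c j)\<^sup>2 = (\<Sum>j\<in>J. sqrt \<bar>V i j\<bar> * (sgn (V i j) * sqrt \<bar>V i j\<bar> * c j))\<^sup>2"
      by (simp only: eq)
    also have "\<dots> \<le> (\<Sum>j\<in>J. (sqrt \<bar>V i j\<bar>)\<^sup>2) * (\<Sum>j\<in>J. (sgn (V i j) * sqrt \<bar>V i j\<bar> * c j)\<^sup>2)"
      by (rule Cauchy_Schwarz_ineq_sum)
    also have "(\<Sum>j\<in>J. (sgn (V i j) * sqrt \<bar>V i j\<bar> * c j)\<^sup>2) = (\<Sum>j\<in>J. \<bar>V i j\<bar> * (c j)\<^sup>2)"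
    proof (rule sum.cong[OF refl])
      fix j
      have "(sgn (V i j))\<^sup>2 * \<bar>V i j\<bar> = \<bar>V i j\<bar>" by (cases "V i j = 0") (auto simp: sgn_if)
      then show "(sgn (V i j) * sqrt \<bar>V i j\<bar> * c j)\<^sup>2 = \<bar>V i j\<bar> * (c j)\<^sup>2"
        by (simp add: power_mult_distrib)
    qed
    also have "(\<Sum>j\<in>J. (sqrt \<bar>V i j\<bar>)\<^sup>2) = (\<Sum>j\<in>J. \<bar>V i j\<bar>)" by simp
    also have "(\<Sum>j\<in>J. \<bar>V i j\<bar>) * (\<Sum>j\<in>J. \<bar>V i j\<bar> * (c j)\<^sup>2) \<le> R * (\<Sum>j\<in>J. \<bar>V i j\<bar> * (c j)\<^sup>2)"
      by (intro mult_right_mono row that sum_nonneg) auto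
    finally show ?thesis .
  qed
  have "(\<Sum>i\<in>I. (\<Sum>j\<in>J. V i j * c j)\<^sup>2) \<le> (\<Sum>i\<in>I. R * (\<Sum>j\<in>J. \<bar>V i j\<bar> * (c j)\<^sup>2))"
    by (rule sum_mono) (rule cs)
  also have "\<dots> = R * (\<Sum>j\<in>J. (c j)\<^sup>2 * (\<Sum>i\<in>I. \<bar>V i j\<bar>))"
    by (simp add: sum_distrib_left sum_distrib_right sum.swap[of _ I J] mult.commute mult.left_commute)
  also have "\<dots> \<le> R * (\<Sum>j\<in>J. (c j)\<^sup>2 * R)"
    by (intro mult_left_mono sum_mono col R0) auto
  also have "\<dots> = R\<^sup>2 * (\<Sum>j\<in>J. (c j)\<^sup>2)"
    by (simp add: sum_distrib_left sum_distrib_right power2_eq_square mult.commute mult.left_commute)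
  finally show ?thesis .
qed

context qo begin

lemma frame: "\<exists>KF>0. \<forall>N z. (\<Sum>i<N. (a (w i) z)\<^sup>2) \<le> KF * (norm z)\<^sup>2"
proof -
  obtain K where K: "K > 0" "\<And>x y. \<bar>a x y\<bar> \<le> norm x * norm y * K" using abound by blast
  have Cp: "C > 0" by (rule Cpos)
  have "(\<Sum>i<N. (a (w i) z)\<^sup>2) \<le> (C * K\<^sup>2) * (norm z)\<^sup>2" for N z
  proof -
    define g where "g i = a (w i) z" for i
    define y where "y = (\<Sum>i<N. g i *\<^sub>R w i)"
    define S where "S = (\<Sum>i<N. (g i)\<^sup>2)"
    have Snn: "S \<ge> 0" unfolding S_def by (simp add: sum_nonneg)
    have "a y z = S" unfolding y_def S_def g_def
      by (simp only: a_sum_left a_scale_left power2_eq_square)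
    then have "S \<le> norm y * norm z * K" using K(2)[of y z] by linarith
    then have "S\<^sup>2 \<le> (norm y * norm z * K)\<^sup>2" using Snn by (intro power_mono) auto
    also have "\<dots> = (norm y)\<^sup>2 * ((norm z)\<^sup>2 * K\<^sup>2)" by (simp add: power_mult_distrib)
    also have "\<dots> \<le> (C * S) * ((norm z)\<^sup>2 * K\<^sup>2)"
    proof (rule mult_right_mono)
      have "(1/C) * (norm y)\<^sup>2 \<le> S" using fin_riesz[where n=N and l=g] unfolding y_def S_def by blast
      then show "(norm y)\<^sup>2 \<le> C * S" using Cp by (simp add: field_simps)
    qed simp
    finally have h: "S * S \<le> S * (C * K\<^sup>2 * (norm z)\<^sup>2)" by (simp add: power2_eq_square algebra_simps)
    show ?thesis
    proof (cases "S = 0")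
      case True then show ?thesis unfolding S_def g_def using Cp by simp
    next
      case False then have "S > 0" using Snn by simp
      then have "S \<le> C * K\<^sup>2 * (norm z)\<^sup>2" using h by (simp add: mult_le_cancel_left_pos)
      then show ?thesis unfolding S_def g_def by simp
    qed
  qed
  moreover have "C * K\<^sup>2 > 0" using Cp K by simp
  ultimately show ?thesis by blast
qed

definition V :: "nat \<Rightarrow> nat \<Rightarrow> real" where "V n i = (if i \<le> n then vc n i else 0)"

lemma v_V: "n < N \<Longrightarrow> v n = (\<Sum>i<N. V n i *\<^sub>R w i)"
proof -
  assume nN: "n < N"
  have "(\<Sum>i<N. V n i *\<^sub>R w i) = (\<Sum>i<Suc n. V n i *\<^sub>R w i)"
    by (rule sum.mono_neutral_right) (use nN in \<open>auto simp: V_def\<close>)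
  also have "\<dots> = (\<Sum>i<Suc n. vc n i *\<^sub>R w i)" by (rule sum.cong) (auto simp: V_def)
  finally show ?thesis using vc[of n] by simp
qed

lemma V_schur: "\<exists>R\<ge>0. \<forall>I J. finite I \<longrightarrow> finite J \<longrightarrow>
   (\<forall>n. (\<Sum>i\<in>I. \<bar>V n i\<bar>) \<le> R) \<and> (\<forall>i. (\<Sum>n\<in>J. \<bar>V n i\<bar>) \<le> R)"
proof -
  obtain \<delta> Kd where dK: "\<delta> > 0" "Kd \<ge> 0" "\<And>n i. i \<le> n \<Longrightarrow> \<bar>vc n i\<bar> \<le> Kd * exp (- \<delta> * d i n)"
    using decay_v by blast
  obtain B where Bs: "\<And>i. summable (\<lambda>j. exp (-\<delta> * d i j))" "\<And>i. (\<Sum>j. exp (-\<delta> * d i j)) \<le> B"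
    using sumb[of \<delta>] dK(1) by auto
  have Vb: "\<bar>V n i\<bar> \<le> Kd * exp (- \<delta> * d i n)" for n i
    using dK(3)[of i n] dK(2) by (auto simp: V_def)
  have sb: "(\<Sum>j\<in>I. exp (- \<delta> * d i j)) \<le> B" if "finite I" for i I
    using sum_le_suminf[OF Bs(1) that, of i] Bs(2)[of i] by fastforce
  have Bnn: "B \<ge> 0" using sb[of "{}" 0] by simp
  have dsym: "\<And>i j. d i j = d j i" by (rule dprops(3))
  show ?thesis
  proof (rule exI[of _ "Kd * B"], intro conjI allI impI)
    show "Kd * B \<ge> 0" using dK(2) Bnn by simp
  next
    fix I J :: "nat set" and n assume fI: "finite I"
    have "(\<Sum>i\<in>I. \<bar>V n i\<bar>) \<le> (\<Sum>i\<in>I. Kd * exp (- \<delta> * d n i))"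
      by (rule sum_mono) (subst dsym, rule Vb)
    also have "\<dots> \<le> Kd * B" using sb[OF fI, of n] dK(2)
      by (simp add: sum_distrib_left[symmetric] mult_left_mono)
    finally show "(\<Sum>i\<in>I. \<bar>V n i\<bar>) \<le> Kd * B" .
  next
    fix I J :: "nat set" and i assume fJ: "finite J"
    have "(\<Sum>n\<in>J. \<bar>V n i\<bar>) \<le> (\<Sum>n\<in>J. Kd * exp (- \<delta> * d i n))"
      by (rule sum_mono) (rule Vb)
    also have "\<dots> \<le> Kd * B" using sb[OF fJ, of i] dK(2)
      by (simp add: sum_distrib_left[symmetric] mult_left_mono)
    finally show "(\<Sum>n\<in>J. \<bar>V n i\<bar>) \<le> Kd * B" .
  qed
qed

lemma synthesis: "\<exists>KS>0. \<forall>P N c. (norm (\<Sum>n\<in>{P..<N}. c n *\<^sub>R v n))\<^sup>2 \<le> KS * (\<Sum>n\<in>{P..<N}. (c n)\<^sup>2)"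
proof -
  obtain R where R1: "R \<ge> 0" and R2: "\<forall>I J. finite I \<longrightarrow> finite J \<longrightarrow>
     (\<forall>n. (\<Sum>i\<in>I. \<bar>V n i\<bar>) \<le> R) \<and> (\<forall>i. (\<Sum>n\<in>J. \<bar>V n i\<bar>) \<le> R)"
    using V_schur by (elim exE conjE)
  have R: "R \<ge> 0" "\<And>I J n i. finite I \<Longrightarrow> finite J \<Longrightarrow> (\<Sum>i\<in>I. \<bar>V n i\<bar>) \<le> R \<and> (\<Sum>n\<in>J. \<bar>V n i\<bar>) \<le> R"
    using R1 R2 by simp_all
  have Cp: "C > 0" by (rule Cpos)
  have "(norm (\<Sum>n\<in>{P..<N}. c n *\<^sub>R v n))\<^sup>2 \<le> (C * R\<^sup>2 + 1) * (\<Sum>n\<in>{P..<N}. (c n)\<^sup>2)" for P N c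
  proof -
    define F where "F = {P..<N}"
    have "(\<Sum>n\<in>F. c n *\<^sub>R v n) = (\<Sum>n\<in>F. c n *\<^sub>R (\<Sum>i<N. V n i *\<^sub>R w i))"
    proof (rule sum.cong[OF refl])
      fix n assume "n \<in> F" then have "n < N" by (simp add: F_def)
      show "c n *\<^sub>R v n = c n *\<^sub>R (\<Sum>i<N. V n i *\<^sub>R w i)" by (simp only: v_V[OF \<open>n < N\<close>])
    qed
    also have "\<dots> = (\<Sum>n\<in>F. \<Sum>i<N. (c n * V n i) *\<^sub>R w i)"
      by (simp only: scaleR_sum_right scaleR_scaleR)
    also have "\<dots> = (\<Sum>i<N. \<Sum>n\<in>F. (c n * V n i) *\<^sub>R w i)"
      by (rule sum.swap)
    also have "\<dots> = (\<Sum>i<N. (\<Sum>n\<in>F. V n i * c n) *\<^sub>R w i)"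
      by (simp only: scaleR_sum_left mult.commute)
    finally have eq: "(\<Sum>n\<in>F. c n *\<^sub>R v n) = (\<Sum>i<N. (\<Sum>n\<in>F. V n i * c n) *\<^sub>R w i)" .
    have "(1/C) * (norm (\<Sum>i<N. (\<Sum>n\<in>F. V n i * c n) *\<^sub>R w i))\<^sup>2 \<le> (\<Sum>i<N. (\<Sum>n\<in>F. V n i * c n)\<^sup>2)"
      using fin_riesz[where n=N and l="\<lambda>i. \<Sum>n\<in>F. V n i * c n"] by blast
    then have "(norm (\<Sum>n\<in>F. c n *\<^sub>R v n))\<^sup>2 \<le> C * (\<Sum>i<N. (\<Sum>n\<in>F. V n i * c n)\<^sup>2)"
      unfolding eq using Cp by (simp add: field_simps)
    also have "\<dots> \<le> C * (R\<^sup>2 * (\<Sum>n\<in>F. (c n)\<^sup>2))"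
    proof (rule mult_left_mono)
      have RR: "(\<Sum>i\<in>{..<N}. \<bar>V n i\<bar>) \<le> R \<and> (\<Sum>n\<in>F. \<bar>V n i\<bar>) \<le> R" for n i
        using R(2)[of "{..<N}" F n i] by (simp add: F_def)
      show "(\<Sum>i<N. (\<Sum>n\<in>F. V n i * c n)\<^sup>2) \<le> R\<^sup>2 * (\<Sum>n\<in>F. (c n)\<^sup>2)"
        using schur[of "{..<N}" F R "\<lambda>i n. V n i" c] RR R(1) by (simp add: F_def)
    qed (use Cp in simp)
    also have "\<dots> \<le> (C * R\<^sup>2 + 1) * (\<Sum>n\<in>F. (c n)\<^sup>2)"
      by (simp add: algebra_simps sum_nonneg)
    finally show ?thesis unfolding F_def .
  qed
  moreover have "C * R\<^sup>2 + 1 > 0" using Cp by (simp add: add_nonneg_pos)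
  ultimately show ?thesis by blast
qed

lemma analysis: "\<exists>KA>0. \<forall>z P N. (\<Sum>n\<in>{P..<N}. (a (v n) z)\<^sup>2) \<le> KA * (norm z)\<^sup>2"
proof -
  obtain R where R1: "R \<ge> 0" and R2: "\<forall>I J. finite I \<longrightarrow> finite J \<longrightarrow>
     (\<forall>n. (\<Sum>i\<in>I. \<bar>V n i\<bar>) \<le> R) \<and> (\<forall>i. (\<Sum>n\<in>J. \<bar>V n i\<bar>) \<le> R)"
    using V_schur by (elim exE conjE)
  have R: "R \<ge> 0" "\<And>I J n i. finite I \<Longrightarrow> finite J \<Longrightarrow> (\<Sum>i\<in>I. \<bar>V n i\<bar>) \<le> R \<and> (\<Sum>n\<in>J. \<bar>V n i\<bar>) \<le> R"
    using R1 R2 by simp_all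
  obtain KF where KF: "KF > 0" "\<And>N z. (\<Sum>i<N. (a (w i) z)\<^sup>2) \<le> KF * (norm z)\<^sup>2" using frame by blast
  have "(\<Sum>n\<in>{P..<N}. (a (v n) z)\<^sup>2) \<le> (R\<^sup>2 * KF + 1) * (norm z)\<^sup>2" for z P N
  proof -
    define F where "F = {P..<N}"
    have "(\<Sum>n\<in>F. (a (v n) z)\<^sup>2) = (\<Sum>n\<in>F. (\<Sum>i<N. V n i * a (w i) z)\<^sup>2)"
    proof (rule sum.cong[OF refl])
      fix n assume "n \<in> F" then have "n < N" by (simp add: F_def)
      show "(a (v n) z)\<^sup>2 = (\<Sum>i<N. V n i * a (w i) z)\<^sup>2"
        by (simp only: v_V[OF \<open>n < N\<close>] a_sum_left a_scale_left)
    qed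
    also have "\<dots> \<le> R\<^sup>2 * (\<Sum>i<N. (a (w i) z)\<^sup>2)"
    proof -
      have RR: "(\<Sum>i\<in>{..<N}. \<bar>V n i\<bar>) \<le> R \<and> (\<Sum>n\<in>F. \<bar>V n i\<bar>) \<le> R" for n i
        using R(2)[of "{..<N}" F n i] by (simp add: F_def)
      show ?thesis
        using schur[of F "{..<N}" R V "\<lambda>i. a (w i) z"] RR R(1) by (simp add: F_def)
    qed
    also have "\<dots> \<le> R\<^sup>2 * (KF * (norm z)\<^sup>2)" by (intro mult_left_mono KF(2)) auto
    also have "\<dots> \<le> (R\<^sup>2 * KF + 1) * (norm z)\<^sup>2" by (simp add: algebra_simps)
    finally show ?thesis unfolding F_def .
  qed
  moreover have "R\<^sup>2 * KF + 1 > 0" using KF by (simp add: add_nonneg_pos)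
  ultimately show ?thesis by blast
qed

end

locale qo2 = A: qo a w C c0 d \<gamma> Cg + T: qo "\<lambda>x y. a y x" w C c0 d \<gamma> Cg
  for a :: "'x::real_normed_vector \<Rightarrow> 'x \<Rightarrow> real" and w C c0 d \<gamma> Cg
begin

definition rho :: "nat \<Rightarrow> real" where "rho n = A.vc n n"

lemma rho_eq: "a (A.v n) (T.v n) = rho n"
proof -
  have "a (A.v n) (T.v n) = a (\<Sum>i<Suc n. A.vc n i *\<^sub>R w i) (T.v n)"
    using A.vc[of n] by (rule arg_cong)
  also have "\<dots> = (\<Sum>i<Suc n. A.vc n i * a (w i) (T.v n))"
    by (simp only: A.a_sum_left A.a_scale_left)
  also have "\<dots> = (\<Sum>i<Suc n. if i = n then A.vc n i else 0)"
    by (rule sum.cong) (auto simp: T.v_w)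
  also have "\<dots> = rho n" by (simp add: rho_def)
  finally show ?thesis .
qed

lemma rho_lb: "\<exists>\<rho>>0. \<forall>n. rho n \<ge> \<rho>"
  unfolding rho_def using A.diag_lb .

lemma Tperp: "z \<in> A.X n \<Longrightarrow> a z (T.v n) = 0"
  using T.v_perp by simp

lemma biorth: "m \<noteq> n \<Longrightarrow> a (A.v m) (T.v n) = 0"
proof (cases "m < n")
  case True
  have "A.v m \<in> A.X n" using A.v_X[of m] A.X_mono[of "Suc m" n] True by auto
  then show ?thesis by (rule Tperp)
next
  case False
  assume "m \<noteq> n" then have "n < m" using False by simp
  have "T.v n \<in> A.X m" using T.v_X[of n] A.X_mono[of "Suc n" m] \<open>n < m\<close> by auto
  then show ?thesis by (rule A.v_perp)
qed

lemma decomp: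
  assumes PN: "P \<le> N" and zX: "z \<in> A.X N" and orth: "\<And>y. y \<in> A.X P \<Longrightarrow> a z y = 0"
  shows "z = (\<Sum>n\<in>{P..<N}. (a z (T.v n) / rho n) *\<^sub>R A.v n)"
proof -
  obtain \<rho> where \<rho>: "\<rho> > 0" "\<And>n. rho n \<ge> \<rho>" using rho_lb by blast
  have rpos: "rho n > 0" for n using \<rho>(1) \<rho>(2)[of n] by linarith
  obtain \<rho>' where \<rho>': "\<rho>' > 0" "\<And>n. T.vc n n \<ge> \<rho>'" using T.diag_lb by blast
  define r where "r = z - (\<Sum>n\<in>{P..<N}. (a z (T.v n) / rho n) *\<^sub>R A.v n)"
  have rX: "r \<in> A.X N" unfolding r_def
  proof (intro span_diff zX span_sum span_scale)
    fix n assume "n \<in> {P..<N}"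
    then show "A.v n \<in> A.X N" using A.v_X[of n] A.X_mono[of "Suc n" N] by auto
  qed
  have h1: "a r (T.v k) = 0" if "k \<in> {P..<N}" for k
  proof -
    have "a r (T.v k) = a z (T.v k) - (\<Sum>n\<in>{P..<N}. (a z (T.v n) / rho n) * a (A.v n) (T.v k))"
      unfolding r_def by (simp only: A.a_diff_left A.a_sum_left A.a_scale_left)
    also have "(\<Sum>n\<in>{P..<N}. (a z (T.v n) / rho n) * a (A.v n) (T.v k)) =
               (\<Sum>n\<in>{P..<N}. if n = k then a z (T.v k) else 0)"
    proof (rule sum.cong[OF refl])
      fix n show "(a z (T.v n) / rho n) * a (A.v n) (T.v k) = (if n = k then a z (T.v k) else 0)"
        using biorth[of n k] rho_eq[of k] rpos[of k] by auto
    qed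
    also have "\<dots> = a z (T.v k)" using that by simp
    finally show ?thesis by simp
  qed
  have h2: "a r (w j) = 0" if "j < P" for j
  proof -
    have "a z (w j) = 0" using orth[of "w j"] A.w_in_X[of j P] that by simp
    moreover have "a (A.v n) (w j) = 0" if "n \<in> {P..<N}" for n
      using A.v_w[of j n] that \<open>j < P\<close> by auto
    ultimately show ?thesis unfolding r_def
      by (simp add: A.a_diff_left A.a_sum_left A.a_scale_left)
  qed
  have h3: "j < N \<longrightarrow> a r (w j) = 0" for j
  proof (induction j rule: less_induct)
    case (less j)
    show ?case
    proof
      assume jN: "j < N"
      show "a r (w j) = 0"
      proof (cases "j < P")
        case True then show ?thesis by (rule h2)
      next
        case False
        then have jk: "j \<in> {P..<N}" using jN by simp
        have "0 = a r (T.v j)" using h1[OF jk] by simp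
        also have "\<dots> = a r (\<Sum>i<Suc j. T.vc j i *\<^sub>R w i)"
          using T.vc[of j] by (rule arg_cong)
        also have "\<dots> = (\<Sum>i<Suc j. T.vc j i * a r (w i))"
          by (simp only: A.a_sum_right A.a_scale_right)
        also have "\<dots> = (\<Sum>i<j. T.vc j i * a r (w i)) + T.vc j j * a r (w j)" by simp
        also have "(\<Sum>i<j. T.vc j i * a r (w i)) = 0"
          using less jN by (intro sum.neutral) auto
        finally have "T.vc j j * a r (w j) = 0" by simp
        moreover have "T.vc j j \<noteq> 0" using \<rho>'(1) \<rho>'(2)[of j] by linarith
        ultimately show ?thesis by simp
      qed
    qed
  qed
  have "a r r = 0" by (rule A.a_zero_right[OF _ rX]) (use h3 in blast)
  then have "r = 0" by (rule A.a_self_zero)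
  then show ?thesis unfolding r_def by simp
qed

end

lemma block_sum:
  fixes h :: "nat \<Rightarrow> 'b::comm_monoid_add" and N :: "nat \<Rightarrow> nat"
  assumes sm: "strict_mono N"
  shows "(\<Sum>k<p. (\<Sum>n\<in>{N (k+l)..<N (Suc (k+l))}. h n)) = (\<Sum>n\<in>{N l..<N (l+p)}. h n)"
proof (induction p)
  case 0 show ?case by simp
next
  case (Suc p)
  have m1: "N l \<le> N (l+p)" by (rule strict_mono_leD[OF sm]) simp
  have m2: "N (l+p) \<le> N (Suc (p+l))" by (rule strict_mono_leD[OF sm]) simp
  have "(\<Sum>k<Suc p. (\<Sum>n\<in>{N (k+l)..<N (Suc (k+l))}. h n)) =
        (\<Sum>n\<in>{N l..<N (l+p)}. h n) + (\<Sum>n\<in>{N (p+l)..<N (Suc (p+l))}. h n)"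
    using Suc.IH by simp
  also have "\<dots> = (\<Sum>n\<in>{N l..<N (Suc (p+l))}. h n)"
    using sum.atLeastLessThan_concat[OF m1 m2] by (simp add: add.commute)
  finally show ?case by (simp add: add.commute)
qed

context qo begin

lemma galerkin_conv:
  assumes sm: "strict_mono N"
    and UX: "\<And>l. U l \<in> X (N l)" and G: "\<And>l y. y \<in> X (N l) \<Longrightarrow> a (U l) y = a u y"
  shows "U \<longlonglongrightarrow> u"
proof -
  obtain lam where lam: "(\<lambda>n. lam n *\<^sub>R w n) sums u" using riesz unfolding riesz_basis_def by blast
  define s where "s M = (\<Sum>i<M. lam i *\<^sub>R w i)" for M
  have s: "s \<longlonglongrightarrow> u" using lam unfolding sums_def s_def .
  have sN: "(\<lambda>m. s (N m)) \<longlonglongrightarrow> u" using LIMSEQ_subseq_LIMSEQ[OF s sm] by (simp add: o_def)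
  obtain K where K: "K > 0" "\<And>x y. \<bar>a x y\<bar> \<le> norm x * norm y * K" using abound by blast
  have cea: "norm (u - U m) \<le> (K/c0) * norm (u - s (N m))" for m
  proof -
    define e where "e = u - U m"
    define y where "y = s (N m)"
    have yX: "y \<in> X (N m)" unfolding y_def s_def by (rule X_sum)
    have "a e (y - U m) = 0"
    proof -
      have zX: "y - U m \<in> X (N m)" using yX UX[of m] by (rule span_diff)
      show ?thesis unfolding e_def by (simp add: a_diff_left G[OF zX])
    qed
    then have "a e e = a e (u - y)" unfolding e_def by (simp add: a_diff_right)
    also have "\<dots> \<le> norm e * norm (u - y) * K" using K(2)[of e "u - y"] by linarith
    finally have h: "c0 * (norm e)\<^sup>2 \<le> norm e * norm (u - y) * K" using coer[of e] by linarith
    show ?thesis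
    proof (cases "norm e = 0")
      case True then show ?thesis unfolding e_def using K(1) c0pos by simp
    next
      case False
      then have ep: "norm e > 0" by simp
      from h have "norm e * (c0 * norm e) \<le> norm e * (norm (u - y) * K)"
        by (simp add: power2_eq_square algebra_simps)
      then have "c0 * norm e \<le> norm (u - y) * K" using ep by (simp add: mult_le_cancel_left_pos)
      then show ?thesis unfolding e_def y_def using c0pos by (simp add: field_simps)
    qed
  qed
  have "(\<lambda>m. u - s (N m)) \<longlonglongrightarrow> 0"
    using tendsto_diff[OF tendsto_const[of u] sN] by simp
  then have "(\<lambda>m. (K/c0) * norm (u - s (N m))) \<longlonglongrightarrow> 0"
    by (intro tendsto_mult_right_zero tendsto_norm_zero)
  then have "(\<lambda>m. u - U m) \<longlonglongrightarrow> 0"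
    by (rule Lim_null_comparison[rotated]) (rule always_eventually, rule allI, rule cea)
  from tendsto_diff[OF tendsto_const[of u] this] show ?thesis by simp
qed

end

context qo2 begin

lemma main: "\<exists>Cqo>0. \<forall>u (N :: nat \<Rightarrow> nat) U. strict_mono N \<and>
     (\<forall>l. U l \<in> A.X (N l) \<and> (\<forall>y\<in>A.X (N l). a (U l) y = a u y)) \<longrightarrow>
     (\<forall>l. summable (\<lambda>k. (norm (U (k + l + 1) - U (k + l)))\<^sup>2) \<and>
           (1 / Cqo) * (norm (u - U l))\<^sup>2 \<le> (\<Sum>k. (norm (U (k + l + 1) - U (k + l)))\<^sup>2) \<and>
           (\<Sum>k. (norm (U (k + l + 1) - U (k + l)))\<^sup>2) \<le> Cqo * (norm (u - U l))\<^sup>2)"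
proof -
  obtain KS where KS1: "KS > 0" and KS2: "\<forall>P N c. (norm (\<Sum>n\<in>{P..<N}. c n *\<^sub>R A.v n))\<^sup>2 \<le> KS * (\<Sum>n\<in>{P..<N}. (c n)\<^sup>2)"
    using A.synthesis by (elim exE conjE)
  obtain KA where KA1: "KA > 0" and KA2: "\<forall>z P N. (\<Sum>n\<in>{P..<N}. (a z (T.v n))\<^sup>2) \<le> KA * (norm z)\<^sup>2"
    using T.analysis by (elim exE conjE)
  obtain \<rho> where \<rho>1: "\<rho> > 0" and \<rho>2: "\<forall>n. rho n \<ge> \<rho>" using rho_lb by (elim exE conjE)
  define Kq where "Kq = KS * (KA / \<rho>\<^sup>2)"
  have Kq_nn: "Kq \<ge> 0" unfolding Kq_def using KS1 KA1 \<rho>1 by simp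
  have coefb: "(\<Sum>n\<in>{P..<M}. (a z (T.v n) / rho n)\<^sup>2) \<le> (KA / \<rho>\<^sup>2) * (norm z)\<^sup>2" for z P M
  proof -
    have "(\<Sum>n\<in>{P..<M}. (a z (T.v n) / rho n)\<^sup>2) \<le> (\<Sum>n\<in>{P..<M}. (a z (T.v n))\<^sup>2 / \<rho>\<^sup>2)"
    proof (rule sum_mono)
      fix n
      have r: "\<rho>\<^sup>2 \<le> (rho n)\<^sup>2" using \<rho>1 \<rho>2 by (intro power_mono) auto
      have "(a z (T.v n) / rho n)\<^sup>2 = (a z (T.v n))\<^sup>2 / (rho n)\<^sup>2" by (simp add: power_divide)
      also have "\<dots> \<le> (a z (T.v n))\<^sup>2 / \<rho>\<^sup>2"
      proof (rule divide_left_mono[OF r])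
        have rn: "rho n > 0" using \<rho>1 \<rho>2 by (metis less_le_trans)
        show "0 < (rho n)\<^sup>2 * \<rho>\<^sup>2" using rn \<rho>1 by simp
      qed simp
      finally show "(a z (T.v n) / rho n)\<^sup>2 \<le> (a z (T.v n))\<^sup>2 / \<rho>\<^sup>2" .
    qed
    also have "\<dots> = (\<Sum>n\<in>{P..<M}. (a z (T.v n))\<^sup>2) / \<rho>\<^sup>2" by (simp add: sum_divide_distrib)
    also have "\<dots> \<le> (KA * (norm z)\<^sup>2) / \<rho>\<^sup>2"
      using KA2 \<rho>1 by (intro divide_right_mono) auto
    finally show ?thesis by simp
  qed
  show ?thesis
  proof (rule exI[of _ "Kq + 1"], rule conjI[rotated], intro allI impI)
    fix u and N :: "nat \<Rightarrow> nat" and U l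
    assume H: "strict_mono N \<and> (\<forall>l. U l \<in> A.X (N l) \<and> (\<forall>y\<in>A.X (N l). a (U l) y = a u y))"
    have sm: "strict_mono N" using H by simp
    have UX: "U k \<in> A.X (N k)" for k using H by simp
    have G: "y \<in> A.X (N k) \<Longrightarrow> a (U k) y = a u y" for k y using H by simp
    have XN: "A.X (N k) \<subseteq> A.X (N m)" if "k \<le> m" for k m
      by (rule A.X_mono[OF strict_mono_leD[OF sm that]])
    have be1: "a (U k) (T.v n) = 0" if "N k \<le> n" for k n
      using UX[of k] A.X_mono[OF that] by (intro Tperp) auto
    have be2: "a (U m) (T.v n) = a u (T.v n)" if "n < N m" for m n
      using T.v_X[of n] A.X_mono[of "Suc n" "N m"] that by (intro G) auto
    define c where "c n = a u (T.v n) / rho n" for n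
    have blk: "U (Suc k) - U k = (\<Sum>n\<in>{N k..<N (Suc k)}. c n *\<^sub>R A.v n)" for k
    proof -
      have le: "N k \<le> N (Suc k)" by (rule strict_mono_leD[OF sm]) simp
      have zX: "U (Suc k) - U k \<in> A.X (N (Suc k))"
        using UX[of "Suc k"] UX[of k] XN[of k "Suc k"] by (intro span_diff) auto
      have orth: "a (U (Suc k) - U k) y = 0" if "y \<in> A.X (N k)" for y
        using that XN[of k "Suc k"] G[of y k] G[of y "Suc k"] by (auto simp: A.a_diff_left)
      have "U (Suc k) - U k = (\<Sum>n\<in>{N k..<N (Suc k)}. (a (U (Suc k) - U k) (T.v n) / rho n) *\<^sub>R A.v n)"
        by (rule decomp[OF le zX orth])
      also have "\<dots> = (\<Sum>n\<in>{N k..<N (Suc k)}. c n *\<^sub>R A.v n)"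
      proof (rule sum.cong[OF refl])
        fix n assume "n \<in> {N k..<N (Suc k)}"
        then have "N k \<le> n" "n < N (Suc k)" by auto
        then show "(a (U (Suc k) - U k) (T.v n) / rho n) *\<^sub>R A.v n = c n *\<^sub>R A.v n"
          by (simp add: A.a_diff_left be1 be2 c_def)
      qed
      finally show ?thesis .
    qed
    have cblk: "(\<Sum>n\<in>{N k..<N (Suc k)}. (c n)\<^sup>2) \<le> (KA / \<rho>\<^sup>2) * (norm (U (Suc k) - U k))\<^sup>2" for k
    proof -
      have "(\<Sum>n\<in>{N k..<N (Suc k)}. (c n)\<^sup>2) = (\<Sum>n\<in>{N k..<N (Suc k)}. (a (U (Suc k) - U k) (T.v n) / rho n)\<^sup>2)"
      proof (rule sum.cong[OF refl])
        fix n assume "n \<in> {N k..<N (Suc k)}"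
        then have "N k \<le> n" "n < N (Suc k)" by auto
        then show "(c n)\<^sup>2 = (a (U (Suc k) - U k) (T.v n) / rho n)\<^sup>2"
          by (simp add: A.a_diff_left be1 be2 c_def)
      qed
      also have "\<dots> \<le> (KA / \<rho>\<^sup>2) * (norm (U (Suc k) - U k))\<^sup>2" by (rule coefb)
      finally show ?thesis .
    qed
    have cfull: "(\<Sum>n\<in>{N l..<N (l+p)}. (c n)\<^sup>2) \<le> (KA / \<rho>\<^sup>2) * (norm (u - U l))\<^sup>2" for p
    proof -
      have "(\<Sum>n\<in>{N l..<N (l+p)}. (c n)\<^sup>2) = (\<Sum>n\<in>{N l..<N (l+p)}. (a (u - U l) (T.v n) / rho n)\<^sup>2)"
      proof (rule sum.cong[OF refl])
        fix n assume "n \<in> {N l..<N (l+p)}"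
        then have "N l \<le> n" by auto
        then show "(c n)\<^sup>2 = (a (u - U l) (T.v n) / rho n)\<^sup>2"
          by (simp add: A.a_diff_left be1 c_def)
      qed
      also have "\<dots> \<le> (KA / \<rho>\<^sup>2) * (norm (u - U l))\<^sup>2" by (rule coefb)
      finally show ?thesis .
    qed
    define e where "e k = (norm (U (k + l + 1) - U (k + l)))\<^sup>2" for k
    have e_nn: "e k \<ge> 0" for k unfolding e_def by simp
    have e_alt: "e k = (norm (U (Suc (k + l)) - U (k + l)))\<^sup>2" for k unfolding e_def by simp
    have tele: "U (l + p) - U l = (\<Sum>n\<in>{N l..<N (l+p)}. c n *\<^sub>R A.v n)" for p
    proof -
      have "U (l + p) - U l = (\<Sum>k<p. U (Suc (k + l)) - U (k + l))"
        using sum_lessThan_telescope[of "\<lambda>k. U (k + l)" p] by (simp add: add.commute)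
      also have "\<dots> = (\<Sum>k<p. (\<Sum>n\<in>{N (k+l)..<N (Suc (k+l))}. c n *\<^sub>R A.v n))"
        by (rule sum.cong[OF refl]) (rule blk)
      also have "\<dots> = (\<Sum>n\<in>{N l..<N (l+p)}. c n *\<^sub>R A.v n)" by (rule block_sum[OF sm])
      finally show ?thesis .
    qed
    have upper_p: "(\<Sum>k<p. e k) \<le> Kq * (norm (u - U l))\<^sup>2" for p
    proof -
      have "(\<Sum>k<p. e k) \<le> (\<Sum>k<p. KS * (\<Sum>n\<in>{N (k+l)..<N (Suc (k+l))}. (c n)\<^sup>2))"
      proof (rule sum_mono)
        fix k
        show "e k \<le> KS * (\<Sum>n\<in>{N (k+l)..<N (Suc (k+l))}. (c n)\<^sup>2)"
          unfolding e_alt blk using KS2 by blast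
      qed
      also have "\<dots> = KS * (\<Sum>n\<in>{N l..<N (l+p)}. (c n)\<^sup>2)"
        by (simp only: sum_distrib_left[symmetric] block_sum[OF sm])
      also have "\<dots> \<le> KS * ((KA / \<rho>\<^sup>2) * (norm (u - U l))\<^sup>2)"
        using KS1 cfull[of p] by (intro mult_left_mono) auto
      finally show ?thesis unfolding Kq_def by (simp add: mult.assoc)
    qed
    have summ: "summable e" by (rule summableI_nonneg_bounded[OF e_nn upper_p])
    have up: "suminf e \<le> Kq * (norm (u - U l))\<^sup>2" by (rule suminf_le_const[OF summ upper_p])
    have lower_p: "(norm (U (p + l) - U l))\<^sup>2 \<le> Kq * suminf e" for p
    proof -
      have "(norm (U (p + l) - U l))\<^sup>2 = (norm (\<Sum>n\<in>{N l..<N (l+p)}. c n *\<^sub>R A.v n))\<^sup>2"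
        using tele[of p] by (simp add: add.commute)
      also have "\<dots> \<le> KS * (\<Sum>n\<in>{N l..<N (l+p)}. (c n)\<^sup>2)" using KS2 by blast
      also have "(\<Sum>n\<in>{N l..<N (l+p)}. (c n)\<^sup>2) = (\<Sum>k<p. (\<Sum>n\<in>{N (k+l)..<N (Suc (k+l))}. (c n)\<^sup>2))"
        by (rule block_sum[OF sm, symmetric])
      also have "\<dots> \<le> (\<Sum>k<p. (KA / \<rho>\<^sup>2) * e k)"
        by (rule sum_mono) (simp only: e_alt cblk)
      also have "\<dots> = (KA / \<rho>\<^sup>2) * (\<Sum>k<p. e k)" by (simp add: sum_distrib_left)
      also have "\<dots> \<le> (KA / \<rho>\<^sup>2) * suminf e"
        using sum_le_suminf[OF summ, of "{..<p}"] e_nn KA1 \<rho>1 by (intro mult_left_mono) auto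
      finally have "(norm (U (p + l) - U l))\<^sup>2 \<le> KS * ((KA / \<rho>\<^sup>2) * suminf e)"
        using KS1 by (simp add: mult_left_mono)
      then show ?thesis unfolding Kq_def by (simp add: mult.assoc)
    qed
    have conv: "U \<longlonglongrightarrow> u"
      by (rule A.galerkin_conv[OF sm UX G])
    have "(\<lambda>p. (norm (U (p + l) - U l))\<^sup>2) \<longlonglongrightarrow> (norm (u - U l))\<^sup>2"
      by (intro tendsto_intros LIMSEQ_ignore_initial_segment[OF conv])
    then have low: "(norm (u - U l))\<^sup>2 \<le> Kq * suminf e"
      by (rule LIMSEQ_le_const2) (use lower_p in blast)
    have S_nn: "suminf e \<ge> 0" by (rule suminf_nonneg[OF summ e_nn])
    have "(norm (u - U l))\<^sup>2 \<le> (Kq + 1) * suminf e"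
      using low S_nn by (simp add: algebra_simps)
    then have low2: "(1 / (Kq + 1)) * (norm (u - U l))\<^sup>2 \<le> suminf e"
      using Kq_nn by (simp add: field_simps)
    have up2: "suminf e \<le> (Kq + 1) * (norm (u - U l))\<^sup>2"
    proof -
      have "0 \<le> (norm (u - U l))\<^sup>2" by simp
      moreover have "(Kq + 1) * (norm (u - U l))\<^sup>2 = Kq * (norm (u - U l))\<^sup>2 + (norm (u - U l))\<^sup>2"
        by (simp add: algebra_simps)
      ultimately show ?thesis using up by linarith
    qed
    show "summable (\<lambda>k. (norm (U (k + l + 1) - U (k + l)))\<^sup>2) \<and>
           (1 / (Kq + 1)) * (norm (u - U l))\<^sup>2 \<le> (\<Sum>k. (norm (U (k + l + 1) - U (k + l)))\<^sup>2) \<and>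
           (\<Sum>k. (norm (U (k + l + 1) - U (k + l)))\<^sup>2) \<le> (Kq + 1) * (norm (u - U l))\<^sup>2"
      using summ low2 up2 unfolding e_def by simp
  next
    show "Kq + 1 > 0" using Kq_nn by simp
  qed
qed

end

theorem theorem3p12:
  fixes a :: "'x::{real_inner, complete_space} \<Rightarrow> 'x \<Rightarrow> real"
    and w :: "nat \<Rightarrow> 'x" and C c0 :: real
  assumes sep: "separable_space (euclidean :: 'x topology)"
    and bdd: "bounded_bilinear a"
    and c0pos: "c0 > 0"
    and coerc_lb: "\<forall>x. c0 * (norm x)\<^sup>2 \<le> a x x"
    and coerc: "(INF x\<in>UNIV - {0}. a x x / (norm x)\<^sup>2) = c0"
    and riesz: "riesz_basis w C"
    and jaff: "(\<lambda>i j. a (w j) (w i)) \<in> jaffard_class"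
  shows "\<exists>Cqo>0. \<forall>(f :: 'x \<Rightarrow> real) u (N :: nat \<Rightarrow> nat) U.
     bounded_linear f \<and> (\<forall>v. a u v = f v) \<and> strict_mono N \<and>
     (\<forall>l. U l \<in> span (w ` {..<N l}) \<and> (\<forall>v\<in>span (w ` {..<N l}). a (U l) v = f v))
     \<longrightarrow> (\<forall>l. summable (\<lambda>k. (norm (U (k + l + 1) - U (k + l)))\<^sup>2) \<and>
           (1 / Cqo) * (norm (u - U l))\<^sup>2 \<le> (\<Sum>k. (norm (U (k + l + 1) - U (k + l)))\<^sup>2) \<and>
           (\<Sum>k. (norm (U (k + l + 1) - U (k + l)))\<^sup>2) \<le> Cqo * (norm (u - U l))\<^sup>2)"
proof -
  have J: "\<exists>d. nat_metric d \<and>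
     (\<forall>\<epsilon>>0. (\<forall>i. summable (\<lambda>j. exp (- \<epsilon> * d i j))) \<and> (\<exists>B. \<forall>i. (\<Sum>j. exp (- \<epsilon> * d i j)) \<le> B)) \<and>
     (\<exists>\<gamma>>0. \<forall>\<gamma>'. 0 < \<gamma>' \<and> \<gamma>' < \<gamma> \<longrightarrow> (\<exists>Cg. \<forall>i j. \<bar>a (w j) (w i)\<bar> \<le> Cg * exp (- \<gamma>' * d i j)))"
    using jaff unfolding jaffard_class_def mem_Collect_eq .
  obtain d where D: "nat_metric d \<and>
     (\<forall>\<epsilon>>0. (\<forall>i. summable (\<lambda>j. exp (- \<epsilon> * d i j))) \<and> (\<exists>B. \<forall>i. (\<Sum>j. exp (- \<epsilon> * d i j)) \<le> B)) \<and>
     (\<exists>\<gamma>>0. \<forall>\<gamma>'. 0 < \<gamma>' \<and> \<gamma>' < \<gamma> \<longrightarrow> (\<exists>Cg. \<forall>i j. \<bar>a (w j) (w i)\<bar> \<le> Cg * exp (- \<gamma>' * d i j)))"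
    using J by (rule exE)
  note dm = D[THEN conjunct1] and ds = D[THEN conjunct2, THEN conjunct1] and dg = D[THEN conjunct2, THEN conjunct2]
  obtain \<gamma> where gp: "\<gamma> > 0"
    and gb: "\<forall>\<gamma>'. 0 < \<gamma>' \<and> \<gamma>' < \<gamma> \<longrightarrow> (\<exists>Cg. \<forall>i j. \<bar>a (w j) (w i)\<bar> \<le> Cg * exp (- \<gamma>' * d i j))"
    using dg by (elim exE conjE) simp
  have g2: "0 < \<gamma>/2 \<and> \<gamma>/2 < \<gamma>" using gp by simp
  obtain Cg where Cgb: "\<forall>i j. \<bar>a (w j) (w i)\<bar> \<le> Cg * exp (- (\<gamma>/2) * d i j)"
    using gb[rule_format, of "\<gamma>/2", OF g2] by (rule exE)
  have dsym: "d i j = d j i" for i j using dm unfolding nat_metric_def by blast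
  have Cgb': "\<forall>i j. \<bar>a (w i) (w j)\<bar> \<le> Cg * exp (- (\<gamma>/2) * d i j)"
  proof (intro allI)
    fix i j show "\<bar>a (w i) (w j)\<bar> \<le> Cg * exp (- (\<gamma>/2) * d i j)"
    proof -
      have "\<bar>a (w i) (w j)\<bar> \<le> Cg * exp (- (\<gamma>/2) * d j i)" using Cgb by blast
      then show ?thesis using dsym[of j i] by simp
    qed
  qed
  have gp2: "\<gamma>/2 > 0" using gp by simp
  have QA: "qo a w C c0 d (\<gamma>/2) Cg"
    unfolding qo_def using bdd c0pos coerc_lb riesz dm ds Cgb gp2 by simp
  have QT: "qo (\<lambda>x y. a y x) w C c0 d (\<gamma>/2) Cg"
    unfolding qo_def using bounded_bilinear.flip[OF bdd] c0pos coerc_lb riesz dm ds Cgb' gp2 by simp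
  interpret Q: qo2 a w C c0 d "\<gamma>/2" Cg
    unfolding qo2_def using QA QT by simp
  obtain Cqo where Cq: "Cqo > 0" and Mall: "\<forall>u (N :: nat \<Rightarrow> nat) U. strict_mono N \<and>
     (\<forall>l. U l \<in> span (w ` {..<N l}) \<and> (\<forall>y\<in>span (w ` {..<N l}). a (U l) y = a u y)) \<longrightarrow>
     (\<forall>l. summable (\<lambda>k. (norm (U (k + l + 1) - U (k + l)))\<^sup>2) \<and>
           (1 / Cqo) * (norm (u - U l))\<^sup>2 \<le> (\<Sum>k. (norm (U (k + l + 1) - U (k + l)))\<^sup>2) \<and>
           (\<Sum>k. (norm (U (k + l + 1) - U (k + l)))\<^sup>2) \<le> Cqo * (norm (u - U l))\<^sup>2)"
    using Q.main by (elim exE conjE)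
  show ?thesis
  proof (rule exI[of _ Cqo], rule conjI[OF Cq], intro allI impI)
    fix f :: "'x \<Rightarrow> real" and u and N :: "nat \<Rightarrow> nat" and U l
    assume H: "bounded_linear f \<and> (\<forall>v. a u v = f v) \<and> strict_mono N \<and>
     (\<forall>l. U l \<in> span (w ` {..<N l}) \<and> (\<forall>v\<in>span (w ` {..<N l}). a (U l) v = f v))"
    have "strict_mono N \<and> (\<forall>l. U l \<in> span (w ` {..<N l}) \<and> (\<forall>y\<in>span (w ` {..<N l}). a (U l) y = a u y))"
      using H by simp
    then show "summable (\<lambda>k. (norm (U (k + l + 1) - U (k + l)))\<^sup>2) \<and>
           (1 / Cqo) * (norm (u - U l))\<^sup>2 \<le> (\<Sum>k. (norm (U (k + l + 1) - U (k + l)))\<^sup>2) \<and>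
           (\<Sum>k. (norm (U (k + l + 1) - U (k + l)))\<^sup>2) \<le> Cqo * (norm (u - U l))\<^sup>2"
      by (rule Mall[THEN spec, THEN spec, THEN spec, THEN mp, THEN spec])
  qed
qed

end
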